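(* Let $G$ be a $(\Delta+1)$-graph and let $H$ be a graph such that $\Delta(G)+1\ge |V(H)|-1-\Delta(H)$. Then $\chi_i(G\,\square\,H)\le \Delta(G\,\square\,H)+2$.
   Context: All graphs are finite and simple. An incidence of a graph $G$ is a pair $(v,e)$ with $v\in V(G)$, $e\in E(G)$ and $v\in e$. Two incidences $(v,e)$ and $(u,f)$ are adjacent if $v=u$, or $e=f$, or $vu\in\{e,f\}$. An incidence coloring of $G$ assigns colors to all incidences so that adjacent incidences receive distinct colors. $\chi_i(G)$ is the least number of colors in an incidence coloring of $G$. $\Delta(G)$ denotes the maximum degree. For a positive integer $k$, $G$ is a $(\Delta+k)$-graph if it admits an incidence coloring with at most $\Delta(G)+k$ colors. $G\,\square\,H$ denotes the Cartesian product: vertex set $V(G)\times V(H)$, with $(u,v)\sim(u',v')$ iff ($uu'\in E(G)$ and $v=v'$) or ($u=u'$ and $vv'\in E(H)$). *)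

theory Defs
  imports Main
begin

type_synonym 'a graph = "'a set \<times> 'a set set"

definition verts :: "'a graph \<Rightarrow> 'a set" where "verts G = fst G"
definition edges :: "'a graph \<Rightarrow> 'a set set" where "edges G = snd G"

definition simple_graph :: "'a graph \<Rightarrow> bool" where
  "simple_graph G \<longleftrightarrow> finite (verts G) \<and>
     (\<forall>e\<in>edges G. e \<subseteq> verts G \<and> card e = 2)"

definition degree :: "'a graph \<Rightarrow> 'a \<Rightarrow> nat" where
  "degree G v = card {e \<in> edges G. v \<in> e}"

text \<open>Maximum degree (0 for the graph without vertices).\<close>
definition max_degree :: "'a graph \<Rightarrow> nat" where
  "max_degree G = Max (insert 0 (degree G ` verts G))"

definition incidences :: "'a graph \<Rightarrow> ('a \<times> 'a set) set" where
  "incidences G = {(v, e). v \<in> verts G \<and> e \<in> edges G \<and> v \<in> e}"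

definition adjacent_inc :: "'a \<times> 'a set \<Rightarrow> 'a \<times> 'a set \<Rightarrow> bool" where
  "adjacent_inc i j \<longleftrightarrow> (case i of (v, e) \<Rightarrow> case j of (u, f) \<Rightarrow>
      v = u \<or> e = f \<or> {v, u} \<in> {e, f})"

definition incidence_coloring :: "'a graph \<Rightarrow> nat \<Rightarrow> ('a \<times> 'a set \<Rightarrow> nat) \<Rightarrow> bool" where
  "incidence_coloring G k c \<longleftrightarrow>
     (\<forall>i\<in>incidences G. c i < k) \<and>
     (\<forall>i\<in>incidences G. \<forall>j\<in>incidences G. i \<noteq> j \<and> adjacent_inc i j \<longrightarrow> c i \<noteq> c j)"

definition incidence_chromatic_number :: "'a graph \<Rightarrow> nat" where
  "incidence_chromatic_number G = (LEAST k. \<exists>c. incidence_coloring G k c)"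

definition delta_plus_graph :: "nat \<Rightarrow> 'a graph \<Rightarrow> bool" where
  "delta_plus_graph k G \<longleftrightarrow> (\<exists>c. incidence_coloring G (max_degree G + k) c)"

definition cart_prod :: "'a graph \<Rightarrow> 'b graph \<Rightarrow> ('a \<times> 'b) graph" where
  "cart_prod G H =
     (verts G \<times> verts H,
      {{(u, v), (u', v)} | u u' v. {u, u'} \<in> edges G \<and> v \<in> verts H} \<union>
      {{(u, v), (u, v')} | u v v'. u \<in> verts G \<and> {v, v'} \<in> edges H})"

end

theory Submission imports Defs begin

lemma fin_edges: "simple_graph G \<Longrightarrow> finite (edges G)"
  unfolding simple_graph_def
  by (meson PowI finite_Pow_iff finite_subset subsetI)

lemma edge2: "simple_graph G \<Longrightarrow> e \<in> edges G \<Longrightarrow> \<exists>a b. a\<noteq>b \<and> e={a,b} \<and> a \<in> verts G \<and> b \<in> verts G"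
  unfolding simple_graph_def by (metis card_2_iff insert_subset)

lemma deg_le: "simple_graph G \<Longrightarrow> v \<in> verts G \<Longrightarrow> degree G v \<le> max_degree G"
  unfolding max_degree_def simple_graph_def by (intro Max_ge) auto

lemma deg_attained: assumes "simple_graph G" "verts G \<noteq> {}"
  shows "\<exists>u\<in>verts G. max_degree G \<le> degree G u"
proof -
  have "max_degree G \<in> insert 0 (degree G ` verts G)"
    unfolding max_degree_def using assms unfolding simple_graph_def by (intro Max_in) auto
  then show ?thesis using assms(2) by auto
qed

lemma cart_inc:
  assumes "simple_graph G" "simple_graph H" "i \<in> incidences (cart_prod G H)"
  shows "(\<exists>u u' v. i = ((u,v),{(u,v),(u',v)}) \<and> {u,u'}\<in>edges G \<and> u\<noteq>u' \<and> v\<in>verts H) \<or>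
         (\<exists>u v v'. i = ((u,v),{(u,v),(u,v')}) \<and> u\<in>verts G \<and> {v,v'} \<in> edges H \<and> v\<noteq>v')"
proof -
  obtain x e where i: "i = (x,e)" "e \<in> edges (cart_prod G H)" "x \<in> e"
    using assms(3) unfolding incidences_def by auto
  have c2: "\<And>a b. {a,b} \<in> edges G \<Longrightarrow> a \<noteq> b"
    using assms(1) unfolding simple_graph_def by fastforce
  have c2': "\<And>a b. {a,b} \<in> edges H \<Longrightarrow> a \<noteq> b"
    using assms(2) unfolding simple_graph_def by fastforce
  have "e \<in> {{(u, v), (u', v)} | u u' v. {u, u'} \<in> edges G \<and> v \<in> verts H} \<union>
      {{(u, v), (u, v')} | u v v'. u \<in> verts G \<and> {v, v'} \<in> edges H}"
    using i(2) unfolding cart_prod_def edges_def by simp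
  then consider (G) u u' v where "e = {(u, v), (u', v)}" "{u, u'} \<in> edges G" "v \<in> verts H"
    | (H) u v v' where "e = {(u, v), (u, v')}" "u \<in> verts G" "{v, v'} \<in> edges H"
    by blast
  then show ?thesis
  proof cases
    case G
    have "x = (u,v) \<or> x = (u',v)" using G i by blast
    then show ?thesis
    proof
      assume "x = (u,v)" then show ?thesis using G i c2[OF G(2)] by blast
    next
      assume x: "x = (u',v)"
      have "{u',u} \<in> edges G" using G(2) by (simp add: insert_commute)
      moreover have "i = ((u',v),{(u',v),(u,v)})" using x i G(1) by (simp add: insert_commute)
      ultimately show ?thesis using G c2[OF G(2)] by blast
    qed
  next
    case H
    have "x = (u,v) \<or> x = (u,v')" using H i by blast
    then show ?thesis
    proof
      assume "x = (u,v)" then show ?thesis using H i c2'[OF H(3)] by blast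
    next
      assume x: "x = (u,v')"
      have "{v',v} \<in> edges H" using H(3) by (simp add: insert_commute)
      moreover have "i = ((u,v'),{(u,v'),(u,v)})" using x i H(1) by (simp add: insert_commute)
      ultimately show ?thesis using H c2'[OF H(3)] by blast
    qed
  qed
qed

definition colf :: "('b \<Rightarrow> nat \<Rightarrow> nat) \<Rightarrow> ('a \<times> 'a set \<Rightarrow> nat) \<Rightarrow> ('b \<Rightarrow> nat) \<Rightarrow> ('a \<times> 'b) \<times> ('a \<times> 'b) set \<Rightarrow> nat" where
  "colf g c l = (\<lambda>(x,e). if (\<exists>y. e = {x,y} \<and> snd y = snd x \<and> y \<noteq> x) then g (snd x) (c (fst x, fst ` e))
     else l (snd (the_elem (e - {x}))))"

lemma colG: "u \<noteq> u' \<Longrightarrow> colf g c l ((u,v),{(u,v),(u',v)}) = g v (c (u,{u,u'}))"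
  unfolding colf_def by auto

lemma colH: "v \<noteq> v' \<Longrightarrow> colf g c l ((u,v),{(u,v),(u,v')}) = l v'"
proof -
  assume a: "v \<noteq> v'"
  have "\<not> (\<exists>y. {(u,v),(u,v')} = {(u,v),y} \<and> snd y = v \<and> y \<noteq> (u,v))"
    using a by (auto simp: doubleton_eq_iff)
  moreover have "{(u,v),(u,v')} - {(u,v)} = {(u,v')}" using a by auto
  ultimately show ?thesis unfolding colf_def by auto
qed

declare colG[simp] colH[simp]

lemma adj_sym: "adjacent_inc i j = adjacent_inc j i"
  unfolding adjacent_inc_def by (auto split: prod.splits simp: insert_commute)

lemma caseGG:
  assumes "u \<noteq> u'" "a \<noteq> a'"
    "((u,v),{(u,v),(u',v)}) \<noteq> ((a,b),{(a,b),(a',b)})"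
    "adjacent_inc ((u,v),{(u,v),(u',v)}) ((a,b),{(a,b),(a',b)})"
  shows "b = v \<and> (u,{u,u'}) \<noteq> (a,{a,a'}) \<and> adjacent_inc (u,{u,u'}) (a,{a,a'})"
  using assms unfolding adjacent_inc_def by (auto simp: doubleton_eq_iff)

lemma caseHH:
  assumes "v \<noteq> v'" "b \<noteq> b'"
    "((u,v),{(u,v),(u,v')}) \<noteq> ((a,b),{(a,b),(a,b')})"
    "adjacent_inc ((u,v),{(u,v),(u,v')}) ((a,b),{(a,b),(a,b')})"
  shows "v' \<noteq> b'"
  using assms unfolding adjacent_inc_def by (auto simp: doubleton_eq_iff)

lemma caseGH:
  assumes "u \<noteq> u'" "b \<noteq> b'"
    "adjacent_inc ((u,v),{(u,v),(u',v)}) ((a,b),{(a,b),(a,b')})"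
  shows "b' = v \<or> (b = v \<and> a = u) \<or> (b = v \<and> a = u')"
  using assms unfolding adjacent_inc_def by (auto simp: doubleton_eq_iff)

lemma coloring_exists:
  assumes sG: "simple_graph G" and sH: "simple_graph H"
   and c1: "\<forall>i\<in>incidences G. c i < D+1"
   and c2: "\<forall>i\<in>incidences G. \<forall>j\<in>incidences G. i\<noteq>j \<and> adjacent_inc i j \<longrightarrow> c i \<noteq> c j"
   and l1: "inj_on l (verts H)" and l2: "l ` verts H \<subseteq> {0..<K}"
   and g: "\<And>v. v \<in> verts H \<Longrightarrow> inj_on (g v) {0..<D+1} \<and>
        g v ` {0..<D+1} \<subseteq> {0..<K} - insert (l v) (l ` {w. {v,w} \<in> edges H})"
  shows "incidence_coloring (cart_prod G H) K (colf g c l)"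
proof -
  have eG: "\<And>a b. {a,b} \<in> edges G \<Longrightarrow> a \<in> verts G \<and> b \<in> verts G"
    using sG unfolding simple_graph_def by auto
  have eH: "\<And>a b. {a,b} \<in> edges H \<Longrightarrow> a \<in> verts H \<and> b \<in> verts H"
    using sH unfolding simple_graph_def by auto
  have incG: "\<And>a b. {a,b} \<in> edges G \<Longrightarrow> (a,{a,b}) \<in> incidences G"
    using eG unfolding incidences_def by auto
  let ?col = "colf g c l"
  define P where "P i \<longleftrightarrow> (\<exists>u u' v. i = ((u,v),{(u,v),(u',v)}) \<and> {u,u'}\<in>edges G \<and> u\<noteq>u' \<and> v\<in>verts H)" for i
  define Q where "Q i \<longleftrightarrow> (\<exists>u v v'. i = ((u,v),{(u,v),(u,v')}) \<and> u\<in>verts G \<and> {v,v'} \<in> edges H \<and> v\<noteq>v')" for i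
  have PQ: "\<And>i. i \<in> incidences (cart_prod G H) \<Longrightarrow> P i \<or> Q i"
    unfolding P_def Q_def using cart_inc[OF sG sH] by blast
  have GH: "?col i \<noteq> ?col j" if "P i" "Q j" "adjacent_inc i j" for i j
  proof -
    obtain u u' v where i: "i = ((u,v),{(u,v),(u',v)})" "{u,u'}\<in>edges G" "u\<noteq>u'" "v\<in>verts H"
      using \<open>P i\<close> P_def by auto
    obtain a b b' where j: "j = ((a,b),{(a,b),(a,b')})" "a\<in>verts G" "{b,b'} \<in> edges H" "b\<noteq>b'"
      using \<open>Q j\<close> Q_def by auto
    have ci: "?col i = g v (c (u,{u,u'}))" unfolding i(1) colG[OF i(3), of g c l v] by simp
    have cj: "?col j = l b'" unfolding j(1) colH[OF j(4), of g c l a] by simp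
    have "c (u,{u,u'}) \<in> {0..<D+1}" using c1 incG[OF i(2)] by auto
    then have "?col i \<notin> insert (l v) (l ` {w. {v,w} \<in> edges H})" using g[OF i(4)] ci by blast
    moreover have "b' = v \<or> (b = v \<and> a = u) \<or> (b = v \<and> a = u')"
      using caseGH[OF i(3) j(4), of v a] that(3) i(1) j(1) by simp
    then have "l b' \<in> insert (l v) (l ` {w. {v,w} \<in> edges H})" using j(3) by auto
    ultimately show ?thesis using cj by metis
  qed
  show ?thesis unfolding incidence_coloring_def
  proof (intro conjI ballI impI)
    fix i assume "i \<in> incidences (cart_prod G H)"
    then consider "P i" | "Q i" using PQ by blast
    then show "?col i < K"
    proof cases
      case 1
      then obtain u u' v where i: "i = ((u,v),{(u,v),(u',v)})" "{u,u'}\<in>edges G" "u\<noteq>u'" "v\<in>verts H"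
        using P_def by auto
      have "c (u,{u,u'}) \<in> {0..<D+1}" using c1 incG[OF i(2)] by auto
      then have "g v (c (u,{u,u'})) \<in> {0..<K}" using g[OF i(4)] by blast
      then show ?thesis unfolding i(1) colG[OF i(3), of g c l v] by simp
    next
      case 2
      then obtain a b b' where j: "i = ((a,b),{(a,b),(a,b')})" "a\<in>verts G" "{b,b'} \<in> edges H" "b\<noteq>b'"
        using Q_def by auto
      then show ?thesis using l2 eH[OF j(3)] by (simp add: colH[OF j(4)] subset_iff)
    qed
  next
    fix i j assume ij: "i \<in> incidences (cart_prod G H)" "j \<in> incidences (cart_prod G H)"
      "i \<noteq> j \<and> adjacent_inc i j"
    consider "P i" "P j" | "P i" "Q j" | "Q i" "P j" | "Q i" "Q j" using PQ ij by blast
    then show "?col i \<noteq> ?col j"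
    proof cases
      case 1
      obtain u u' v where i: "i = ((u,v),{(u,v),(u',v)})" "{u,u'}\<in>edges G" "u\<noteq>u'" "v\<in>verts H"
        using \<open>P i\<close> P_def by auto
      obtain a a' b where j: "j = ((a,b),{(a,b),(a',b)})" "{a,a'}\<in>edges G" "a\<noteq>a'" "b\<in>verts H"
        using \<open>P j\<close> P_def by auto
      have k: "b = v \<and> (u,{u,u'}) \<noteq> (a,{a,a'}) \<and> adjacent_inc (u,{u,u'}) (a,{a,a'})"
        using caseGG[OF i(3) j(3), of v b] ij(3) i(1) j(1) by simp
      have "c (u,{u,u'}) \<noteq> c (a,{a,a'})" using c2[rule_format, OF incG[OF i(2)] incG[OF j(2)]] k by blast
      moreover have "c (u,{u,u'}) \<in> {0..<D+1}" "c (a,{a,a'}) \<in> {0..<D+1}"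
        using c1 incG[OF i(2)] incG[OF j(2)] by auto
      ultimately have "g v (c (u,{u,u'})) \<noteq> g v (c (a,{a,a'}))"
        using g[OF i(4)] inj_on_eq_iff[of "g v" "{0..<D+1}"] by blast
      then show ?thesis using k unfolding i(1) j(1) colG[OF i(3), of g c l v] colG[OF j(3), of g c l b] by simp
    next
      case 2 then show ?thesis using GH ij by blast
    next
      case 3 then show ?thesis using GH[of j i] ij adj_sym by metis
    next
      case 4
      obtain u v v' where i: "i = ((u,v),{(u,v),(u,v')})" "u\<in>verts G" "{v,v'} \<in> edges H" "v\<noteq>v'"
        using \<open>Q i\<close> Q_def by auto
      obtain a b b' where j: "j = ((a,b),{(a,b),(a,b')})" "a\<in>verts G" "{b,b'} \<in> edges H" "b\<noteq>b'"
        using \<open>Q j\<close> Q_def by auto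
      have "v' \<noteq> b'" using caseHH[OF i(4) j(4), of u a] ij(3) i(1) j(1) by simp
      then have "l v' \<noteq> l b'" using l1 eH[OF i(3)] eH[OF j(3)] inj_on_eq_iff[of l "verts H" v' b'] by blast
      then show ?thesis unfolding i(1) j(1) colH[OF i(4), of g c l u] colH[OF j(4), of g c l a] by simp
    qed
  qed
qed


lemma deg_cart:
  assumes sG: "simple_graph G" and sH: "simple_graph H" and u: "u \<in> verts G" and v: "v \<in> verts H"
  shows "degree G u + degree H v \<le> degree (cart_prod G H) (u,v)"
proof -
  define A where "A = (\<lambda>e. (\<lambda>x. (x,v)) ` e) ` {e\<in>edges G. u\<in>e}"
  define B where "B = (\<lambda>f. Pair u ` f) ` {f\<in>edges H. v\<in>f}"
  have fG: "finite {e\<in>edges G. u\<in>e}" using fin_edges[OF sG] by simp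
  have fH: "finite {f\<in>edges H. v\<in>f}" using fin_edges[OF sH] by simp
  have i1: "inj (\<lambda>x. (x,v))" by (auto intro: injI)
  have i2: "inj (Pair u)" by (auto intro: injI)
  have cA: "card A = degree G u" unfolding A_def degree_def
    by (rule card_image, rule inj_onI, simp add: inj_image_eq_iff[OF i1])
  have cB: "card B = degree H v" unfolding B_def degree_def
    by (rule card_image, rule inj_onI, simp add: inj_image_eq_iff[OF i2])
  have AB: "A \<inter> B = {}"
  proof (rule ccontr)
    assume "A \<inter> B \<noteq> {}"
    then obtain x where "x \<in> A" "x \<in> B" by blast
    from \<open>x \<in> A\<close> obtain e where e: "e \<in> edges G" "u \<in> e" and xe: "x = (\<lambda>x. (x,v)) ` e"
      unfolding A_def by blast
    from \<open>x \<in> B\<close> obtain f where f: "f \<in> edges H" "v \<in> f" and xf: "x = Pair u ` f"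
      unfolding B_def by blast
    from xe xf have eq: "(\<lambda>x. (x,v)) ` e = Pair u ` f" by simp
    obtain a b where ab: "a \<noteq> b" "e = {a,b}" using edge2[OF sG e(1)] by blast
    have "(a,v) \<in> Pair u ` f" "(b,v) \<in> Pair u ` f" using eq ab by blast+
    then show False using ab by auto
  qed
  have sub: "A \<union> B \<subseteq> {e \<in> edges (cart_prod G H). (u,v) \<in> e}"
  proof
    fix x assume "x \<in> A \<union> B"
    then show "x \<in> {e \<in> edges (cart_prod G H). (u,v) \<in> e}"
    proof
      assume "x \<in> A"
      then obtain e where e: "e \<in> edges G" "u \<in> e" and x: "x = (\<lambda>x. (x,v)) ` e" unfolding A_def by blast
      obtain a b where ab: "a \<noteq> b" "e = {a,b}" using edge2[OF sG e(1)] by blast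
      have "x = {(a,v),(b,v)}" using x ab by auto
      then show ?thesis using e ab v x unfolding cart_prod_def edges_def by auto
    next
      assume "x \<in> B"
      then obtain e where e: "e \<in> edges H" "v \<in> e" and x: "x = Pair u ` e" unfolding B_def by blast
      obtain a b where ab: "a \<noteq> b" "e = {a,b}" using edge2[OF sH e(1)] by blast
      have "x = {(u,a),(u,b)}" using x ab by auto
      then show ?thesis using e ab u x unfolding cart_prod_def edges_def by auto
    qed
  qed
  have fC: "finite (edges (cart_prod G H))"
  proof -
    have "edges (cart_prod G H) \<subseteq> Pow (verts G \<times> verts H)"
      using sG sH unfolding cart_prod_def edges_def simple_graph_def by auto
    moreover have "finite (verts G \<times> verts H)" using sG sH unfolding simple_graph_def by auto
    ultimately show ?thesis by (meson finite_Pow_iff finite_subset)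
  qed
  have "card (A \<union> B) = card A + card B"
    using AB fG fH unfolding A_def B_def by (intro card_Un_disjoint) auto
  moreover have "card (A \<union> B) \<le> degree (cart_prod G H) (u,v)"
    unfolding degree_def using fC sub by (intro card_mono) auto
  ultimately show ?thesis using cA cB by simp
qed


lemma deg_le_cart:
  assumes sG: "simple_graph G" and sH: "simple_graph H" and u: "u \<in> verts G" and v: "v \<in> verts H"
  shows "degree (cart_prod G H) (u,v) \<le> max_degree (cart_prod G H)"
proof -
  have "finite (verts (cart_prod G H))" using sG sH unfolding simple_graph_def cart_prod_def verts_def by auto
  moreover have "(u,v) \<in> verts (cart_prod G H)" using u v unfolding cart_prod_def verts_def by auto
  ultimately show ?thesis unfolding max_degree_def by (intro Max_ge) auto
qed

lemma nbr_card:
  assumes sH: "simple_graph H" and v: "v \<in> verts H"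
  shows "card {w. {v,w} \<in> edges H} \<le> max_degree H"
proof -
  have "{w. {v,w} \<in> edges H} \<subseteq> (\<lambda>e. the_elem (e - {v})) ` {e\<in>edges H. v\<in>e}"
  proof
    fix w assume "w \<in> {w. {v,w} \<in> edges H}"
    then have w: "{v,w} \<in> edges H" by simp
    then obtain a b where "a \<noteq> b" "{v,w} = {a,b}" using edge2[OF sH] by blast
    then have "v \<noteq> w" by (auto simp: doubleton_eq_iff)
    then have "the_elem ({v,w} - {v}) = w" by (simp add: insert_Diff_if)
    then show "w \<in> (\<lambda>e. the_elem (e - {v})) ` {e\<in>edges H. v\<in>e}" using w by force
  qed
  then have "card {w. {v,w} \<in> edges H} \<le> card ((\<lambda>e. the_elem (e - {v})) ` {e\<in>edges H. v\<in>e})"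
    using fin_edges[OF sH] by (intro card_mono) auto
  also have "\<dots> \<le> card {e\<in>edges H. v\<in>e}" by (rule card_image_le) (use fin_edges[OF sH] in auto)
  also have "\<dots> \<le> max_degree H" using deg_le[OF sH v] unfolding degree_def .
  finally show ?thesis .
qed

theorem mainTheorem3:
  fixes G :: "'a graph" and H :: "'b graph"
  assumes "simple_graph G" and "simple_graph H"
    and "delta_plus_graph 1 G"
    and "max_degree G + 1 \<ge> card (verts H) - 1 - max_degree H"
  shows "incidence_chromatic_number (cart_prod G H) \<le> max_degree (cart_prod G H) + 2"
proof (cases "verts G = {} \<or> verts H = {}")
  case True
  have "incidences (cart_prod G H) = {}"
    using True unfolding incidences_def cart_prod_def verts_def by auto
  then have "incidence_coloring (cart_prod G H) 0 (\<lambda>_. 0)" unfolding incidence_coloring_def by simp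
  then have "incidence_chromatic_number (cart_prod G H) = 0"
    unfolding incidence_chromatic_number_def by (intro Least_eq_0) blast
  then show ?thesis by simp
next
  case False
  note sG = assms(1) and sH = assms(2)
  define D where "D = max_degree G"
  define K where "K = max_degree G + max_degree H + 2"
  obtain c where c: "incidence_coloring G (D+1) c" using assms(3) unfolding delta_plus_graph_def D_def by auto
  have fH: "finite (verts H)" using sH unfolding simple_graph_def by auto
  obtain l where l: "bij_betw l (verts H) {0..<card (verts H)}" using ex_bij_betw_finite_nat[OF fH] by blast
  have nK: "card (verts H) \<le> K" using assms(4) unfolding K_def by linarith
  have l1: "inj_on l (verts H)" using l bij_betw_def by blast
  have l2: "l ` verts H \<subseteq> {0..<K}" using l nK unfolding bij_betw_def by auto
  have "\<forall>v\<in>verts H. \<exists>h. inj_on h {0..<D+1} \<and>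
        h ` {0..<D+1} \<subseteq> {0..<K} - insert (l v) (l ` {w. {v,w} \<in> edges H})"
  proof
    fix v assume v: "v \<in> verts H"
    let ?L = "insert (l v) (l ` {w. {v,w} \<in> edges H})"
    have fN: "finite {w. {v,w} \<in> edges H}"
    proof -
      have "{w. {v,w} \<in> edges H} \<subseteq> verts H" using sH unfolding simple_graph_def by auto
      then show ?thesis using fH finite_subset by blast
    qed
    have "card ?L \<le> Suc (card (l ` {w. {v,w} \<in> edges H}))" by (rule card_insert_le_m1) auto
    also have "\<dots> \<le> Suc (card {w. {v,w} \<in> edges H})" using card_image_le[OF fN] by simp
    also have "\<dots> \<le> Suc (max_degree H)" using nbr_card[OF sH v] by simp
    finally have cL: "card ?L \<le> Suc (max_degree H)" .
    have "{0..<K} \<subseteq> ({0..<K} - ?L) \<union> ?L" by auto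
    then have "card {0..<K} \<le> card (({0..<K} - ?L) \<union> ?L)" using fN by (intro card_mono) auto
    also have "\<dots> \<le> card ({0..<K} - ?L) + card ?L" by (rule card_Un_le)
    finally have "card {0..<D+1} \<le> card ({0..<K} - ?L)" using cL unfolding K_def D_def by simp
    then show "\<exists>h. inj_on h {0..<D+1} \<and> h ` {0..<D+1} \<subseteq> {0..<K} - ?L"
      using card_le_inj[of "{0..<D+1}" "{0..<K} - ?L"] by auto
  qed
  then obtain g where g: "\<And>v. v \<in> verts H \<Longrightarrow> inj_on (g v) {0..<D+1} \<and>
        g v ` {0..<D+1} \<subseteq> {0..<K} - insert (l v) (l ` {w. {v,w} \<in> edges H})"
    by metis
  have col: "incidence_coloring (cart_prod G H) K (colf g c l)"
    using c unfolding incidence_coloring_def[of G]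
    by (intro coloring_exists[OF sG sH _ _ l1 l2 g]) auto
  then have "incidence_chromatic_number (cart_prod G H) \<le> K"
    unfolding incidence_chromatic_number_def by (intro Least_le) blast
  moreover obtain u where u: "u \<in> verts G" "max_degree G \<le> degree G u" using deg_attained[OF sG] False by blast
  moreover obtain v where v: "v \<in> verts H" "max_degree H \<le> degree H v" using deg_attained[OF sH] False by blast
  ultimately show ?thesis using deg_cart[OF sG sH u(1) v(1)] deg_le_cart[OF sG sH u(1) v(1)]
    unfolding K_def by linarith
qed

end
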